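(* Consider the three-mass system in $\mathbb{R}^2$ described in the context, reduced by $x$-translation symmetry to a vector field on $TQ/\mathbb{R}$. Let $\hat q_*\in Q/\mathbb{R}$ be a non-degenerate minimum of the reduced potential $\hat U$, i.e. $\mathrm{d}\hat U(\hat q_* )=0$ and the Hessian $\hat K$ of $\hat U$ at $\hat q_*$ is positive definite, and suppose the total Rayleigh dissipation function $R$ is positive definite on the fiber of $TQ/\mathbb{R}$ above $\hat q_*$. Then $(\hat q_*,0)\in TQ/\mathbb{R}$ is a robustly stable equilibrium of the reduced system.
   Context: Three unit masses $q_i=(x_i,z_i)\in\mathbb{R}^2$, $Q=\{q\in\mathbb{R}^6:q_i\neq q_j\}$, $\ell_k=\|q_i-q_j\|$ for $\{i,j,k\}=\{1,2,3\}$, $\chi(s)=\tfrac12 s^2$ for $s<0$ and $0$ otherwise (tacitly smoothed near $0$). Equations of motion: $\ddot q=F(q,\dot q)-\mathrm{d}U(q)$ with $U=\frac{\kappa_s}{2}\sum_k(\ell_k-\bar\ell_k)^2+\kappa_{\mathrm{np}}\sum_i\chi(z_i)+\sum_i z_i$ and $F=-\partial R/\partial\dot q$, where $R=\frac{\nu_s}{2}\sum_k\dot\ell_k^2-\frac{\nu_{\mathrm{ns}}}{2}\sum_i\chi'(z_i)\dot x_i^2+\frac{\nu_{\mathrm{db}}}{2}\sum_i\chi(z_i)\dot z_i^2$, all constants positive. Everything is invariant under the free proper action of $(\mathbb{R},+)$ translating all $x_i$ (trivially on velocities), giving reduced potential $\hat U$ with $U=\hat U\circ\pi$ and a reduced vector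 field on $TQ/\mathbb{R}$. An equilibrium $x_*$ of $\dot x=f(x)$ is robustly stable if $f(x_* )=0$ and the spectrum of $Df(x_* )$ lies strictly in the open left half-plane. *)

theory Defs
  imports "HOL-Analysis.Analysis"
begin

text \<open>Configuration q = (x, z) with x, z :: real^3; mass i sits at (x$i, z$i).
  Velocities v = (vx, vz) of the same type.\<close>

type_synonym config = "(real^3) \<times> (real^3)"

definition pt :: "config \<Rightarrow> 3 \<Rightarrow> real \<times> real" where
  "pt q i = (fst q $ i, snd q $ i)"

definition inQ :: "config \<Rightarrow> bool" where
  "inQ q \<longleftrightarrow> (\<forall>i j. i \<noteq> j \<longrightarrow> pt q i \<noteq> pt q j)"

definition opp :: "3 \<Rightarrow> 3 \<times> 3" where
  "opp k = (if k = 1 then (2, 3) else if k = 2 then (3, 1) else (1, 2))"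

definition ell :: "config \<Rightarrow> 3 \<Rightarrow> real" where
  "ell q k = dist (pt q (fst (opp k))) (pt q (snd (opp k)))"

definition ell_dot :: "config \<Rightarrow> config \<Rightarrow> 3 \<Rightarrow> real" where
  "ell_dot q v k =
     ((pt q (fst (opp k)) - pt q (snd (opp k))) \<bullet> (pt v (fst (opp k)) - pt v (snd (opp k))))
     / ell q k"

definition Upot :: "(real \<Rightarrow> real) \<Rightarrow> real \<Rightarrow> real \<Rightarrow> real^3 \<Rightarrow> config \<Rightarrow> real" where
  "Upot chi ks knp lbar q =
     ks / 2 * (\<Sum>k\<in>UNIV. (ell q k - lbar $ k)^2)
     + knp * (\<Sum>i\<in>UNIV. chi (snd q $ i)) + (\<Sum>i\<in>UNIV. snd q $ i)"

text \<open>Rayleigh dissipation function R(q, v); chi1 is the derivative of chi.\<close>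
definition Rdiss :: "(real \<Rightarrow> real) \<Rightarrow> (real \<Rightarrow> real) \<Rightarrow> real \<Rightarrow> real \<Rightarrow> real \<Rightarrow>
                    config \<Rightarrow> config \<Rightarrow> real" where
  "Rdiss chi chi1 nus nuns nudb q v =
     nus / 2 * (\<Sum>k\<in>UNIV. (ell_dot q v k)^2)
     - nuns / 2 * (\<Sum>i\<in>UNIV. chi1 (snd q $ i) * (fst v $ i)^2)
     + nudb / 2 * (\<Sum>i\<in>UNIV. chi (snd q $ i) * (snd v $ i)^2)"

text \<open>Gradient (w.r.t. the Euclidean inner product, unit masses).\<close>
definition grad :: "('a::real_inner \<Rightarrow> real) \<Rightarrow> 'a \<Rightarrow> 'a" where
  "grad g x = (THE D. GDERIV g x :> D)"

text \<open>Acceleration: q'' = F(q,q') - dU(q), F = - dR/dq'.\<close>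
definition accel :: "(real \<Rightarrow> real) \<Rightarrow> (real \<Rightarrow> real) \<Rightarrow> real \<Rightarrow> real \<Rightarrow> real^3 \<Rightarrow>
                     real \<Rightarrow> real \<Rightarrow> real \<Rightarrow> config \<Rightarrow> config \<Rightarrow> config" where
  "accel chi chi1 ks knp lbar nus nuns nudb q v =
     - grad (Rdiss chi chi1 nus nuns nudb q) v - grad (Upot chi ks knp lbar) q"

text \<open>Coordinates on Q/R (quotient by x-translations):
  r = (x2 - x1, x3 - x1, z1, z2, z3).  sec is the global section x1 = 0,
  proj_vel the (linear) differential of the quotient map on velocities.
  TQ/R is identified with (Q/R) x R^6.\<close>
definition sec :: "real^5 \<Rightarrow> config" where
  "sec r = (vector [0, r$1, r$2], vector [r$3, r$4, r$5])"

definition proj_vel :: "config \<Rightarrow> real^5" where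
  "proj_vel v = vector [fst v $ 2 - fst v $ 1, fst v $ 3 - fst v $ 1,
                        snd v $ 1, snd v $ 2, snd v $ 3]"

definition Qhat :: "(real^5) set" where
  "Qhat = {r. inQ (sec r)}"

text \<open>Reduced potential: U = Uhat o pi.\<close>
definition Uhat :: "(real \<Rightarrow> real) \<Rightarrow> real \<Rightarrow> real \<Rightarrow> real^3 \<Rightarrow> real^5 \<Rightarrow> real" where
  "Uhat chi ks knp lbar r = Upot chi ks knp lbar (sec r)"

definition red_field :: "(real \<Rightarrow> real) \<Rightarrow> (real \<Rightarrow> real) \<Rightarrow> real \<Rightarrow> real \<Rightarrow> real^3 \<Rightarrow>
                     real \<Rightarrow> real \<Rightarrow> real \<Rightarrow> (real^5) \<times> config \<Rightarrow> (real^5) \<times> config" where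
  "red_field chi chi1 ks knp lbar nus nuns nudb s =
     (proj_vel (snd s), accel chi chi1 ks knp lbar nus nuns nudb (sec (fst s)) (snd s))"

text \<open>Spectrum of a real linear map: eigenvalues of its complexification,
  i.e. L(u + i w) = lambda (u + i w) with (u,w) nonzero.\<close>
definition cspectrum :: "('a::real_vector \<Rightarrow> 'a) \<Rightarrow> complex set" where
  "cspectrum L = {c. \<exists>u w. (u \<noteq> 0 \<or> w \<noteq> 0) \<and>
       L u = Re c *\<^sub>R u - Im c *\<^sub>R w \<and> L w = Im c *\<^sub>R u + Re c *\<^sub>R w}"

definition robustly_stable :: "('a::euclidean_space \<Rightarrow> 'a) \<Rightarrow> 'a \<Rightarrow> bool" where
  "robustly_stable f xs \<longleftrightarrow> f xs = 0 \<and>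
     (\<exists>L. (f has_derivative L) (at xs) \<and> (\<forall>c\<in>cspectrum L. Re c < 0))"

end

theory Submission
  imports Defs "HOL-Analysis.Analysis"
begin



lemma exhaust_5:
  fixes x :: 5
  shows "x = 1 \<or> x = 2 \<or> x = 3 \<or> x = 4 \<or> x = 5"
proof (induct x)
  case (of_int z)
  then have "z = 0 \<or> z = 1 \<or> z = 2 \<or> z = 3 \<or> z = 4" by fastforce
  then show ?case by auto
qed

lemma UNIV_5: "UNIV = {1, 2, 3, 4, 5::5}"
  using exhaust_5 by auto

lemma sum_5: "sum f (UNIV::5 set) = f 1 + f 2 + f 3 + f 4 + f 5"
  unfolding UNIV_5 by (simp add: ac_simps)

lemma forall_5: "(\<forall>i::5. P i) \<longleftrightarrow> P 1 \<and> P 2 \<and> P 3 \<and> P 4 \<and> P 5"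
  by (metis exhaust_5)

lemma vector_5 [simp]:
 "(vector [a,b,c,d,e] ::('a::zero)^5)$1 = a"
 "(vector [a,b,c,d,e] ::('a::zero)^5)$2 = b"
 "(vector [a,b,c,d,e] ::('a::zero)^5)$3 = c"
 "(vector [a,b,c,d,e] ::('a::zero)^5)$4 = d"
 "(vector [a,b,c,d,e] ::('a::zero)^5)$5 = e"
  unfolding vector_def by simp_all

lemma vector3_nth: "(vector [a,b,c] :: ('a::zero)^3) $ i = (if i = 1 then a else if i = 2 then b else c)"
  using exhaust_3[of i] by auto

definition adjP :: "real^5 \<Rightarrow> config" where
  "adjP y = (vector [-(y$1) - y$2, y$1, y$2], vector [y$3, y$4, y$5])"

lemma adjP_inner: "y \<bullet> proj_vel v = v \<bullet> adjP y"
  by (cases v) (simp add: proj_vel_def adjP_def inner_vec_def sum_5 sum_3 algebra_simps)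

lemma linear_proj_vel: "linear proj_vel"
  by (rule linearI) (simp_all add: proj_vel_def vec_eq_iff forall_5 algebra_simps)


definition avec :: "config \<Rightarrow> 3 \<Rightarrow> config" where
  "avec q k = (((fst q $ fst (opp k) - fst q $ snd (opp k)) / ell q k) *\<^sub>R (axis (fst (opp k)) 1 - axis (snd (opp k)) 1),
               ((snd q $ fst (opp k) - snd q $ snd (opp k)) / ell q k) *\<^sub>R (axis (fst (opp k)) 1 - axis (snd (opp k)) 1))"

lemma ell_dot_avec: "ell_dot q v k = avec q k \<bullet> v"
  by (cases v) (simp add: ell_dot_def avec_def pt_def inner_diff_left inner_axis' divide_inverse
      algebra_simps)

definition Bmap :: "(real \<Rightarrow> real) \<Rightarrow> (real \<Rightarrow> real) \<Rightarrow> real \<Rightarrow> real \<Rightarrow> real \<Rightarrow> config \<Rightarrow> config \<Rightarrow> config" where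
  "Bmap chi chi1 nus nuns nudb q v =
     nus *\<^sub>R (\<Sum>k\<in>UNIV. (avec q k \<bullet> v) *\<^sub>R avec q k)
     - nuns *\<^sub>R (\<Sum>i\<in>UNIV. (chi1 (snd q $ i) * fst v $ i) *\<^sub>R (axis i 1, 0))
     + nudb *\<^sub>R (\<Sum>i\<in>UNIV. (chi (snd q $ i) * snd v $ i) *\<^sub>R (0, axis i 1))"

lemma inner_Bmap: "w \<bullet> Bmap chi chi1 nus nuns nudb q v =
    nus * (\<Sum>k\<in>UNIV. (avec q k \<bullet> v) * (avec q k \<bullet> w))
    - nuns * (\<Sum>i\<in>UNIV. chi1 (snd q $ i) * fst v $ i * fst w $ i)
    + nudb * (\<Sum>i\<in>UNIV. chi (snd q $ i) * snd v $ i * snd w $ i)"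
  by (simp add: Bmap_def inner_diff_right inner_add_right inner_sum_right inner_Pair_0 inner_axis
      inner_commute[of w] mult.assoc)

lemma Bmap_sym: "w \<bullet> Bmap chi chi1 nus nuns nudb q v = v \<bullet> Bmap chi chi1 nus nuns nudb q w"
  by (simp add: inner_Bmap mult.commute mult.left_commute)

lemma Rdiss_Bmap: "Rdiss chi chi1 nus nuns nudb q v = (v \<bullet> Bmap chi chi1 nus nuns nudb q v) / 2"
  by (simp add: Rdiss_def inner_Bmap ell_dot_avec power2_eq_square mult.assoc sum_divide_distrib)

lemma linear_Bmap: "linear (Bmap chi chi1 nus nuns nudb q)"
  by (rule linearI) (simp_all add: Bmap_def inner_add_right scaleR_add_left sum.distrib
      distrib_left scaleR_add_right algebra_simps scaleR_sum_right prod_eq_iff fst_sum snd_sum)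

lemma grad_eq:
  fixes f :: "'a::real_inner \<Rightarrow> real"
  assumes "GDERIV f x :> D" shows "grad f x = D"
  unfolding grad_def
proof (rule the_equality)
  show "GDERIV f x :> D" by fact
  fix D' assume "GDERIV f x :> D'"
  then have "(\<lambda>h. h \<bullet> D') = (\<lambda>h. h \<bullet> D)"
    using assms unfolding gderiv_def by (rule has_derivative_unique)
  then have "(D' - D) \<bullet> D' = (D' - D) \<bullet> D" by meson
  then have "(D' - D) \<bullet> (D' - D) = 0" by (simp add: inner_diff_right)
  then show "D' = D" by simp
qed

lemma GDERIV_Rdiss: "GDERIV (Rdiss chi chi1 nus nuns nudb q) v :> Bmap chi chi1 nus nuns nudb q v"
proof -
  let ?B = "Bmap chi chi1 nus nuns nudb q"
  have bl: "bounded_linear ?B" using linear_Bmap linear_conv_bounded_linear by blast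
  have "((\<lambda>v. (v \<bullet> ?B v) / 2) has_derivative (\<lambda>h. (v \<bullet> ?B h + h \<bullet> ?B v) / 2)) (at v)"
    by (auto intro!: derivative_eq_intros bounded_linear_imp_has_derivative[OF bl])
  moreover have "(\<lambda>h. (v \<bullet> ?B h + h \<bullet> ?B v) / 2) = (\<lambda>h. h \<bullet> ?B v)"
    using Bmap_sym by (auto simp: fun_eq_iff)
  moreover have "Rdiss chi chi1 nus nuns nudb q = (\<lambda>v. (v \<bullet> ?B v) / 2)"
    by (auto simp: fun_eq_iff Rdiss_Bmap)
  ultimately show ?thesis unfolding gderiv_def by simp
qed

lemma grad_Rdiss: "grad (Rdiss chi chi1 nus nuns nudb q) v = Bmap chi chi1 nus nuns nudb q v"
  by (rule grad_eq[OF GDERIV_Rdiss])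

lemma fst_sec_proj: "fst (sec (proj_vel q)) $ i = fst q $ i - fst q $ 1"
  using exhaust_3[of i] by (auto simp: sec_def proj_vel_def)

lemma snd_sec_proj: "snd (sec (proj_vel q)) = snd q"
  by (simp add: sec_def proj_vel_def vec_eq_iff forall_3)

lemma pt_sec_proj: "pt (sec (proj_vel q)) i = pt q i - (fst q $ 1, 0)"
  by (simp add: pt_def fst_sec_proj snd_sec_proj)

lemma ell_sec_proj: "ell (sec (proj_vel q)) k = ell q k"
  by (simp add: ell_def pt_sec_proj dist_norm)

lemma Upot_proj: "Upot chi ks knp lbar q = Uhat chi ks knp lbar (proj_vel q)"
  by (simp add: Uhat_def Upot_def ell_sec_proj snd_sec_proj)

lemma proj_sec: "proj_vel (sec r) = r"
  by (simp add: sec_def proj_vel_def vec_eq_iff forall_5)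

lemma linear_sec: "linear sec"
  by (rule linearI) (simp_all add: sec_def vec_eq_iff forall_3)

lemma GDERIV_Upot:
  assumes "(Uhat chi ks knp lbar has_derivative (\<lambda>h. Gr \<bullet> h)) (at r)"
  shows "GDERIV (Upot chi ks knp lbar) (sec r) :> adjP Gr"
proof -
  have bl: "bounded_linear proj_vel" using linear_proj_vel linear_conv_bounded_linear by blast
  have "((\<lambda>q. Uhat chi ks knp lbar (proj_vel q)) has_derivative (\<lambda>h. Gr \<bullet> proj_vel h)) (at (sec r))"
    by (rule has_derivative_compose[OF bounded_linear_imp_has_derivative[OF bl]]) (simp add: proj_sec assms)
  then show ?thesis unfolding gderiv_def
    by (simp add: Upot_proj[symmetric] adjP_inner fun_eq_iff)
qed

lemma open_Qhat: "open Qhat"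
proof -
  have cs: "continuous_on UNIV (\<lambda>r. pt (sec r) i)" for i
  proof -
    have "linear (\<lambda>r. pt (sec r) i)"
      using linear_sec by (intro linearI) (simp_all add: pt_def linear_add linear_scale)
    then show ?thesis using linear_conv_bounded_linear linear_continuous_on by blast
  qed
  have "Qhat = (\<Inter>p\<in>{p. fst p \<noteq> snd p}. {r. pt (sec r) (fst p) \<noteq> pt (sec r) (snd p)})"
    by (auto simp: Qhat_def inQ_def)
  moreover have "open {r. pt (sec r) (fst p) \<noteq> pt (sec r) (snd p)}" for p
    by (intro open_Collect_neq cs)
  ultimately show ?thesis
    using open_INT[of "{p::3\<times>3. fst p \<noteq> snd p}" "\<lambda>p. {r. pt (sec r) (fst p) \<noteq> pt (sec r) (snd p)}"] by auto
qed

lemma linear_adjP: "linear adjP"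
  by (rule linearI) (simp_all add: adjP_def vec_eq_iff forall_3 algebra_simps)

lemma adjP_inj: "adjP y = 0 \<Longrightarrow> y = 0"
  by (simp add: adjP_def vec_eq_iff forall_3 forall_5 prod_eq_iff)



lemma delta_bound:
  fixes f :: "'a::euclidean_space \<Rightarrow> real"
  assumes ball: "ball x d \<subseteq> S"
    and fd: "\<And>y. y \<in> S \<Longrightarrow> (f has_derivative (\<lambda>h. G y \<bullet> h)) (at y)"
    and lin: "linear K"
    and est: "\<And>y. norm (y - x) < d \<Longrightarrow> norm (G y - G x - K (y - x)) \<le> e * norm (y - x)"
    and t: "0 < t" "t * (norm h + norm k) < d"
    and e: "e \<ge> 0"
  shows "\<bar>(f (x + t *\<^sub>R h + t *\<^sub>R k) - f (x + t *\<^sub>R h) - f (x + t *\<^sub>R k) + f x) - t^2 * (h \<bullet> K k)\<bar>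
          \<le> 2 * e * t^2 * (norm h + norm k) * norm h"
proof -
  define phi where "phi s = f (x + s *\<^sub>R h + t *\<^sub>R k) - f (x + s *\<^sub>R h)" for s
  define y1 where "y1 s = x + s *\<^sub>R h + t *\<^sub>R k" for s
  define y2 where "y2 s = x + s *\<^sub>R h" for s
  have n1: "norm (y1 s - x) \<le> t * (norm h + norm k)" if "0 \<le> s" "s \<le> t" for s
  proof -
    have "norm (y1 s - x) = norm (s *\<^sub>R h + t *\<^sub>R k)" by (simp add: y1_def)
    also have "\<dots> \<le> s * norm h + t * norm k"
      using norm_triangle_ineq[of "s *\<^sub>R h" "t *\<^sub>R k"] that t by simp
    also have "\<dots> \<le> t * (norm h + norm k)"
      using that by (simp add: distrib_left mult_right_mono)
    finally show ?thesis .
  qed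
  have n2: "norm (y2 s - x) \<le> t * (norm h + norm k)" if "0 \<le> s" "s \<le> t" for s
  proof -
    have "norm (y2 s - x) = s * norm h" using that by (simp add: y2_def)
    also have "\<dots> \<le> t * (norm h + norm k)"
      using that by (simp add: distrib_left mult_right_mono add_increasing2)
    finally show ?thesis .
  qed
  have inS1: "y1 s \<in> S" if "0 \<le> s" "s \<le> t" for s
    using n1[OF that] t ball by (auto simp: dist_norm norm_minus_commute subset_iff)
  have inS2: "y2 s \<in> S" if "0 \<le> s" "s \<le> t" for s
    using n2[OF that] t ball by (auto simp: dist_norm norm_minus_commute subset_iff)
  have deriv: "(phi has_derivative (\<lambda>d. d * (G (y1 s) \<bullet> h - G (y2 s) \<bullet> h))) (at s within {0..t})"
    if "0 \<le> s" "s \<le> t" for s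
  proof -
    have a: "((\<lambda>s. y1 s) has_derivative (\<lambda>d. d *\<^sub>R h)) (at s within {0..t})"
      unfolding y1_def by (auto intro!: derivative_eq_intros)
    have b: "((\<lambda>s. y2 s) has_derivative (\<lambda>d. d *\<^sub>R h)) (at s within {0..t})"
      unfolding y2_def by (auto intro!: derivative_eq_intros)
    note c1 = has_derivative_compose[OF a fd[OF inS1[OF that]]]
    note c2 = has_derivative_compose[OF b fd[OF inS2[OF that]]]
    have "phi = (\<lambda>s. f (y1 s) - f (y2 s))" by (auto simp: phi_def y1_def y2_def)
    then show ?thesis
      using has_derivative_diff[OF c1 c2] by (simp add: algebra_simps)
  qed
  obtain xi where xi: "xi \<in> {0..t}" and mv: "phi t - phi 0 = (t - 0) * (G (y1 xi) \<bullet> h - G (y2 xi) \<bullet> h)"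
    using mvt_very_simple[of 0 t phi "\<lambda>s d. d * (G (y1 s) \<bullet> h - G (y2 s) \<bullet> h)"] deriv t by auto
  have xi0: "0 \<le> xi" "xi \<le> t" using xi by auto
  define R1 where "R1 = G (y1 xi) - G x - K (y1 xi - x)"
  define R2 where "R2 = G (y2 xi) - G x - K (y2 xi - x)"
  have R1: "norm R1 \<le> e * (t * (norm h + norm k))"
    unfolding R1_def using est[of "y1 xi"] n1[OF xi0] t e
    by (smt (verit, ccfv_SIG) mult_left_mono)
  have R2: "norm R2 \<le> e * (t * (norm h + norm k))"
    unfolding R2_def using est[of "y2 xi"] n2[OF xi0] t e
    by (smt (verit, ccfv_SIG) mult_left_mono)
  have "K (y1 xi - x) - K (y2 xi - x) = K (y1 xi - y2 xi)"
    using linear_diff[OF lin] by (metis diff_diff_eq2 diff_add_cancel add_diff_cancel_left)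
  also have "y1 xi - y2 xi = t *\<^sub>R k" by (simp add: y1_def y2_def)
  also have "K (t *\<^sub>R k) = t *\<^sub>R K k" using linear_scale[OF lin] by simp
  finally have Kd: "K (y1 xi - x) - K (y2 xi - x) = t *\<^sub>R K k" .
  have "G (y1 xi) - G (y2 xi) = t *\<^sub>R K k + (R1 - R2)"
    using Kd unfolding R1_def R2_def by (simp add: algebra_simps)
  then have gd: "G (y1 xi) \<bullet> h - G (y2 xi) \<bullet> h = t * (h \<bullet> K k) + (R1 - R2) \<bullet> h"
    by (metis inner_diff_left inner_add_left inner_scaleR_left inner_commute)
  have phid: "phi t - phi 0 = f (x + t *\<^sub>R h + t *\<^sub>R k) - f (x + t *\<^sub>R h) - f (x + t *\<^sub>R k) + f x"
    by (simp add: phi_def)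
  have "\<bar>(R1 - R2) \<bullet> h\<bar> \<le> norm (R1 - R2) * norm h" by (rule Cauchy_Schwarz_ineq2)
  also have "\<dots> \<le> (norm R1 + norm R2) * norm h"
    by (simp add: mult_right_mono norm_triangle_ineq4)
  also have "\<dots> \<le> (2 * e * (t * (norm h + norm k))) * norm h"
    using R1 R2 by (intro mult_right_mono) auto
  finally have rb: "\<bar>(R1 - R2) \<bullet> h\<bar> \<le> 2 * e * t * (norm h + norm k) * norm h" by simp
  have "(f (x + t *\<^sub>R h + t *\<^sub>R k) - f (x + t *\<^sub>R h) - f (x + t *\<^sub>R k) + f x) - t^2 * (h \<bullet> K k)
        = t * ((R1 - R2) \<bullet> h)"
    using mv phid gd by (simp add: power2_eq_square algebra_simps)
  then have "\<bar>(f (x + t *\<^sub>R h + t *\<^sub>R k) - f (x + t *\<^sub>R h) - f (x + t *\<^sub>R k) + f x) - t^2 * (h \<bullet> K k)\<bar>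
        = t * \<bar>(R1 - R2) \<bullet> h\<bar>" using t by (simp add: abs_mult)
  also have "\<dots> \<le> t * (2 * e * t * (norm h + norm k) * norm h)"
    using rb t by (intro mult_left_mono) auto
  finally show ?thesis by (simp add: power2_eq_square algebra_simps)
qed

lemma hess_sym:
  fixes f :: "'a::euclidean_space \<Rightarrow> real"
  assumes S: "open S" "x \<in> S"
    and fd: "\<And>y. y \<in> S \<Longrightarrow> (f has_derivative (\<lambda>h. G y \<bullet> h)) (at y)"
    and Gd: "(G has_derivative K) (at x)"
  shows "h \<bullet> K k = k \<bullet> K h"
proof -
  have lin: "linear K" using Gd has_derivative_linear by blast
  obtain d0 where d0: "d0 > 0" "ball x d0 \<subseteq> S" using S open_contains_ball by blast
  define C where "C = 4 * (norm h + norm k)^2 + 1"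
  have C0: "0 \<le> 4 * (norm h + norm k)^2" by simp
  have C: "C > 0" unfolding C_def using C0 by linarith
  have "\<bar>h \<bullet> K k - k \<bullet> K h\<bar> \<le> e" if e: "e > 0" for e
  proof -
    define e' where "e' = e / C"
    have e': "e' > 0" using e C by (simp add: e'_def)
    obtain d1 where d1: "d1 > 0" "\<And>y. norm (y - x) < d1 \<Longrightarrow> norm (G y - G x - K (y - x)) \<le> e' * norm (y - x)"
      using Gd e' unfolding has_derivative_at_alt by blast
    define d where "d = min d0 d1"
    have d: "d > 0" "ball x d \<subseteq> S" using d0 d1 by (auto simp: d_def)
    have est: "norm (G y - G x - K (y - x)) \<le> e' * norm (y - x)" if "norm (y - x) < d" for y
      using d1(2) that by (simp add: d_def)
    have hk: "0 < 2 * (norm h + norm k + 1)" by (smt (verit) norm_ge_zero)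
    define t where "t = d / (2 * (norm h + norm k + 1))"
    have t: "0 < t" "t * (norm h + norm k) < d"
    proof -
      show "0 < t" unfolding t_def by (rule divide_pos_pos[OF d(1) hk])
      have "t * (norm h + norm k) < t * (2 * (norm h + norm k + 1))"
        using \<open>0 < t\<close> by (intro mult_strict_left_mono; smt (verit) norm_ge_zero)
      also have "\<dots> = d" using hk unfolding t_def by simp
      finally show "t * (norm h + norm k) < d" .
    qed
    have t2: "t * (norm k + norm h) < d" using t by (simp add: add.commute)
    note b1 = delta_bound[OF d(2) fd lin est t less_imp_le[OF e']]
    note b2 = delta_bound[OF d(2) fd lin est t(1) t2 less_imp_le[OF e']]
    have sw: "x + t *\<^sub>R k + t *\<^sub>R h = x + t *\<^sub>R h + t *\<^sub>R k" by (simp add: algebra_simps)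
    let ?D = "f (x + t *\<^sub>R h + t *\<^sub>R k) - f (x + t *\<^sub>R h) - f (x + t *\<^sub>R k) + f x"
    have b1': "\<bar>?D - t^2 * (h \<bullet> K k)\<bar> \<le> 2 * e' * t^2 * (norm h + norm k) * (norm h + norm k)"
      using b1 e' by (smt (verit) mult_left_mono norm_ge_zero zero_le_power2 mult_nonneg_nonneg)
    have b2': "\<bar>?D - t^2 * (k \<bullet> K h)\<bar> \<le> 2 * e' * t^2 * (norm h + norm k) * (norm h + norm k)"
      using b2 e' sw by (smt (verit) mult_left_mono norm_ge_zero zero_le_power2 mult_nonneg_nonneg)
    have tri: "\<And>a x y b::real. \<bar>a - x\<bar> \<le> b \<Longrightarrow> \<bar>a - y\<bar> \<le> b \<Longrightarrow> \<bar>x - y\<bar> \<le> 2 * b" by arith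
    have "\<bar>t^2 * (h \<bullet> K k) - t^2 * (k \<bullet> K h)\<bar> \<le> 2 * (2 * e' * t^2 * (norm h + norm k) * (norm h + norm k))"
      by (rule tri[OF b1' b2'])
    also have "\<bar>t^2 * (h \<bullet> K k) - t^2 * (k \<bullet> K h)\<bar> = t^2 * \<bar>h \<bullet> K k - k \<bullet> K h\<bar>"
      by (simp add: right_diff_distrib[symmetric] abs_mult)
    also have "2 * (2 * e' * t^2 * (norm h + norm k) * (norm h + norm k)) = t^2 * (e' * (4 * (norm h + norm k)^2))"
      by (simp add: power2_eq_square algebra_simps)
    also have "\<dots> \<le> t^2 * (e' * C)"
      unfolding C_def using e' by (intro mult_left_mono) auto
    finally have "t^2 * \<bar>h \<bullet> K k - k \<bullet> K h\<bar> \<le> t^2 * (e' * C)" .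
    then have "\<bar>h \<bullet> K k - k \<bullet> K h\<bar> \<le> e' * C" using t by simp
    then show ?thesis using C by (simp add: e'_def)
  qed
  then show ?thesis by (meson abs_le_zero_iff dense_ge eq_iff_diff_eq_0 abs_ge_zero order_trans)
qed



lemma deriv_scal_cont:
  fixes g :: "'a::real_normed_vector \<Rightarrow> 'c::real_normed_vector" and b :: "'b::real_inner"
  assumes g: "continuous (at x0) g" and nb: "norm b \<le> 1"
  shows "((\<lambda>p. (snd p \<bullet> b) *\<^sub>R g (fst p)) has_derivative (\<lambda>p. (snd p \<bullet> b) *\<^sub>R g x0)) (at (x0, 0))"
  unfolding has_derivative_at_alt
proof (intro conjI allI impI)
  show "bounded_linear (\<lambda>p::'a \<times> 'b. (snd p \<bullet> b) *\<^sub>R g x0)"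
    by (intro bounded_linear_intros)
  fix e :: real assume e: "e > 0"
  obtain d where d: "d > 0" "\<And>x'. dist x' x0 < d \<Longrightarrow> dist (g x') (g x0) < e"
    using g e unfolding continuous_at_eps_delta by blast
  show "\<exists>d>0. \<forall>y. norm (y - (x0, 0)) < d \<longrightarrow>
      norm ((snd y \<bullet> b) *\<^sub>R g (fst y) - (snd (x0, 0::'b) \<bullet> b) *\<^sub>R g (fst (x0, 0::'b)) -
            (snd (y - (x0, 0)) \<bullet> b) *\<^sub>R g x0) \<le> e * norm (y - (x0, 0))"
  proof (intro exI[of _ d] conjI allI impI)
    show "d > 0" by fact
    fix y :: "'a \<times> 'b" assume y: "norm (y - (x0, 0)) < d"
    obtain r v where yrv: "y = (r, v)" by (cases y)
    have nr: "norm (r - x0) \<le> norm (y - (x0, 0))" using yrv by (simp add: norm_Pair)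
    have nv: "norm v \<le> norm (y - (x0, 0))" using yrv by (simp add: norm_Pair)
    have gr: "norm (g r - g x0) \<le> e" using d(2)[of r] nr y by (simp add: dist_norm)
    have "(snd y \<bullet> b) *\<^sub>R g (fst y) - (snd (x0, 0::'b) \<bullet> b) *\<^sub>R g (fst (x0, 0::'b)) -
            (snd (y - (x0, 0)) \<bullet> b) *\<^sub>R g x0 = (v \<bullet> b) *\<^sub>R (g r - g x0)"
      by (simp add: yrv algebra_simps)
    also have "norm \<dots> = \<bar>v \<bullet> b\<bar> * norm (g r - g x0)" by simp
    also have "\<dots> \<le> norm v * norm (g r - g x0)"
    proof (rule mult_right_mono)
      have "\<bar>v \<bullet> b\<bar> \<le> norm v * norm b" by (rule Cauchy_Schwarz_ineq2)
      also have "\<dots> \<le> norm v" using nb mult_left_mono[OF nb norm_ge_zero[of v]] by simp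
      finally show "\<bar>v \<bullet> b\<bar> \<le> norm v" .
    qed simp
    also have "\<dots> \<le> norm (y - (x0, 0)) * e"
      by (intro mult_mono nv gr) auto
    finally show "norm ((snd y \<bullet> b) *\<^sub>R g (fst y) - (snd (x0, 0::'b) \<bullet> b) *\<^sub>R g (fst (x0, 0::'b)) -
            (snd (y - (x0, 0)) \<bullet> b) *\<^sub>R g x0) \<le> e * norm (y - (x0, 0))"
      by (simp add: mult.commute)
  qed
qed

lemma deriv_lin_cont:
  fixes M :: "'a::real_normed_vector \<Rightarrow> 'b::euclidean_space \<Rightarrow> 'c::real_normed_vector"
  assumes lin: "\<And>r. linear (M r)" and cont: "\<And>b. b \<in> Basis \<Longrightarrow> continuous (at x0) (\<lambda>r. M r b)"
  shows "((\<lambda>p. M (fst p) (snd p)) has_derivative (\<lambda>p. M x0 (snd p))) (at (x0, 0))"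
proof -
  have rep: "M r v = (\<Sum>b\<in>Basis. (v \<bullet> b) *\<^sub>R M r b)" for r v
  proof -
    have "M r v = M r (\<Sum>b\<in>Basis. (v \<bullet> b) *\<^sub>R b)" by (simp add: euclidean_representation)
    also have "\<dots> = (\<Sum>b\<in>Basis. (v \<bullet> b) *\<^sub>R M r b)"
      by (simp add: linear_sum[OF lin] linear_scale[OF lin])
    finally show ?thesis .
  qed
  have "((\<lambda>p. \<Sum>b\<in>Basis. (snd p \<bullet> b) *\<^sub>R M (fst p) b) has_derivative
          (\<lambda>p. \<Sum>b\<in>Basis. (snd p \<bullet> b) *\<^sub>R M x0 b)) (at (x0, 0))"
    by (intro has_derivative_sum deriv_scal_cont cont) auto
  then show ?thesis by (simp add: rep[symmetric])
qed



lemma cont_Bmap: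
  assumes c0: "\<And>x. isCont chi x" and c1: "\<And>x. isCont chi1 x" and l: "\<And>k. ell q0 k \<noteq> 0"
  shows "continuous (at q0) (\<lambda>q. Bmap chi chi1 nus nuns nudb q b)"
proof -
  have ce: "continuous (at q0) (\<lambda>q. ell q k)" for k
    unfolding ell_def pt_def by (intro continuous_intros)
  have ca: "continuous (at q0) (\<lambda>q. avec q k)" for k
    unfolding avec_def by (intro continuous_intros ce l)
  show ?thesis unfolding Bmap_def
    by (intro continuous_intros ca isCont_o2[OF _ c0] isCont_o2[OF _ c1])
qed

theorem proposition8:
  fixes chi chi1 chi2 :: "real \<Rightarrow> real"
    and ks knp nus nuns nudb :: real
    and lbar :: "real^3"
    and rs :: "real^5"
  assumes chi_deriv: "\<And>s. (chi has_real_derivative chi1 s) (at s)"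
    and chi1_deriv: "\<And>s. (chi1 has_real_derivative chi2 s) (at s)"
    and chi2_cont: "continuous_on UNIV chi2"
    and chi_smoothed: "\<exists>\<delta>>0. \<forall>s. (s \<le> -\<delta> \<longrightarrow> chi s = s^2 / 2) \<and> (\<delta> \<le> s \<longrightarrow> chi s = 0)"
    and pos: "ks > 0" "knp > 0" "nus > 0" "nuns > 0" "nudb > 0" "\<forall>k. lbar $ k > 0"
    and rs_in: "rs \<in> Qhat"
    and nondeg_min: "\<exists>G K. (\<forall>r\<in>Qhat. (Uhat chi ks knp lbar has_derivative (\<lambda>h. G r \<bullet> h)) (at r))
                        \<and> G rs = 0 \<and> (G has_derivative K) (at rs)
                        \<and> (\<forall>h. h \<noteq> 0 \<longrightarrow> h \<bullet> K h > 0)"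
    and R_posdef: "\<forall>v. v \<noteq> 0 \<longrightarrow> Rdiss chi chi1 nus nuns nudb (sec rs) v > 0"
  shows "robustly_stable (red_field chi chi1 ks knp lbar nus nuns nudb) (rs, 0)"
proof -
  obtain G K where Gd: "\<forall>r\<in>Qhat. (Uhat chi ks knp lbar has_derivative (\<lambda>h. G r \<bullet> h)) (at r)"
    and G0: "G rs = 0" and GK: "(G has_derivative K) (at rs)"
    and Kpos: "\<And>h. h \<noteq> 0 \<Longrightarrow> h \<bullet> K h > 0"
    using nondeg_min by blast
  have Ksym: "\<And>h k. h \<bullet> K k = k \<bullet> K h"
    by (rule hess_sym[OF open_Qhat rs_in _ GK]) (use Gd in blast)
  have linK: "linear K" using GK has_derivative_linear by blast
  define B0 where "B0 = Bmap chi chi1 nus nuns nudb (sec rs)"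
  have Bpos: "v \<noteq> 0 \<Longrightarrow> v \<bullet> B0 v > 0" for v
  proof -
    assume "v \<noteq> 0"
    then have "Rdiss chi chi1 nus nuns nudb (sec rs) v > 0" using R_posdef by blast
    then show ?thesis unfolding B0_def Rdiss_Bmap by simp
  qed
  have Bnn: "v \<bullet> B0 v \<ge> 0" for v
    using Bpos[of v] by (cases "v = 0") (auto simp: B0_def inner_Bmap)
  define L where "L p = (proj_vel (snd p), - B0 (snd p) - adjP (K (fst p)))" for p :: "(real^5) \<times> config"
  define F where "F s = (proj_vel (snd s), - Bmap chi chi1 nus nuns nudb (sec (fst s)) (snd s) - adjP (G (fst s)))"
    for s :: "(real^5) \<times> config"
  have feq: "red_field chi chi1 ks knp lbar nus nuns nudb s = F s" if "s \<in> Qhat \<times> UNIV" for s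
  proof -
    have "fst s \<in> Qhat" using that by auto
    then have "grad (Upot chi ks knp lbar) (sec (fst s)) = adjP (G (fst s))"
      using Gd by (intro grad_eq GDERIV_Upot) auto
    then show ?thesis
      by (simp add: red_field_def accel_def grad_Rdiss F_def)
  qed
  have cchi: "isCont chi x" for x using chi_deriv DERIV_isCont by blast
  have cchi1: "isCont chi1 x" for x using chi1_deriv DERIV_isCont by blast
  have ell0: "ell (sec rs) k \<noteq> 0" for k
  proof -
    have "fst (opp k) \<noteq> snd (opp k)" by (simp add: opp_def)
    then show ?thesis using rs_in by (auto simp: Qhat_def inQ_def ell_def)
  qed
  have blsec: "bounded_linear sec" using linear_sec linear_conv_bounded_linear by blast
  have blP: "bounded_linear proj_vel" using linear_proj_vel linear_conv_bounded_linear by blast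
  have blA: "bounded_linear adjP" using linear_adjP linear_conv_bounded_linear by blast
  have dB: "((\<lambda>p. Bmap chi chi1 nus nuns nudb (sec (fst p)) (snd p)) has_derivative (\<lambda>p. B0 (snd p))) (at (rs, 0))"
    unfolding B0_def
  proof (rule deriv_lin_cont[where M = "\<lambda>r. Bmap chi chi1 nus nuns nudb (sec r)"])
    show "linear (Bmap chi chi1 nus nuns nudb (sec r))" for r by (rule linear_Bmap)
    show "continuous (at rs) (\<lambda>r. Bmap chi chi1 nus nuns nudb (sec r) b)" for b
      using isCont_o2[OF linear_continuous_at[OF blsec] cont_Bmap[OF cchi cchi1 ell0]] .
  qed
  have dP: "((\<lambda>p. proj_vel (snd p)) has_derivative (\<lambda>p. proj_vel (snd p))) (at (rs, 0::config))"
    by (rule has_derivative_compose[OF has_derivative_snd bounded_linear_imp_has_derivative[OF blP]]) (rule has_derivative_ident)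
  have dG: "((\<lambda>p. adjP (G (fst p))) has_derivative (\<lambda>p. adjP (K (fst p)))) (at (rs, 0::config))"
    by (rule has_derivative_compose[OF has_derivative_compose[OF has_derivative_fst] bounded_linear_imp_has_derivative[OF blA]])
       (simp_all add: GK)
  have dF: "(F has_derivative L) (at (rs, 0))"
    unfolding F_def L_def
    by (intro has_derivative_Pair dP has_derivative_diff has_derivative_minus dB dG)
  have dR: "(red_field chi chi1 ks knp lbar nus nuns nudb has_derivative L) (at (rs, 0))"
    by (rule has_derivative_transform_within_open[OF dF open_Times[OF open_Qhat open_UNIV]])
       (use rs_in feq in auto)
  have f0: "red_field chi chi1 ks knp lbar nus nuns nudb (rs, 0) = 0"
  proof -
    have "F (rs, 0) = 0"
      using linear_0[OF linear_proj_vel] linear_0[OF linear_Bmap] linear_0[OF linear_adjP]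
      by (simp add: F_def G0 zero_prod_def)
    then show ?thesis using feq[of "(rs, 0)"] rs_in by auto
  qed
  have spec: "Re c < 0" if "c \<in> cspectrum L" for c
  proof -
    define a where "a = Re c"
    define b where "b = Im c"
    have "\<exists>u w. (u \<noteq> 0 \<or> w \<noteq> 0) \<and> L u = a *\<^sub>R u - b *\<^sub>R w \<and> L w = b *\<^sub>R u + a *\<^sub>R w"
      using that unfolding cspectrum_def a_def b_def by (rule CollectD)
    then obtain u w where nz: "u \<noteq> 0 \<or> w \<noteq> 0" and Lu: "L u = a *\<^sub>R u - b *\<^sub>R w"
      and Lw: "L w = b *\<^sub>R u + a *\<^sub>R w"
      by blast
    obtain u1 u2 where u: "u = (u1, u2)" by (cases u)
    obtain w1 w2 where w: "w = (w1, w2)" by (cases w)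
    have E1: "proj_vel u2 = a *\<^sub>R u1 - b *\<^sub>R w1" and E2: "- B0 u2 - adjP (K u1) = a *\<^sub>R u2 - b *\<^sub>R w2"
      using Lu by (simp_all add: u w L_def)
    have E3: "proj_vel w2 = b *\<^sub>R u1 + a *\<^sub>R w1" and E4: "- B0 w2 - adjP (K w1) = b *\<^sub>R u2 + a *\<^sub>R w2"
      using Lw by (simp_all add: u w L_def)
    show ?thesis
    proof (cases "u2 = 0 \<and> w2 = 0")
      case True
      have "adjP (K u1) = 0" "adjP (K w1) = 0"
        using E2 E4 True linear_0[OF linear_Bmap] by (simp_all add: B0_def)
      then have "K u1 = 0" "K w1 = 0" using adjP_inj by auto
      then have "u1 = 0" "w1 = 0" using Kpos by force+
      then show ?thesis using nz True u w by (simp add: zero_prod_def)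
    next
      case False
      define \<beta> where "\<beta> = u2 \<bullet> B0 u2 + w2 \<bullet> B0 w2"
      define \<kappa> where "\<kappa> = u1 \<bullet> K u1 + w1 \<bullet> K w1"
      define \<rho> where "\<rho> = u2 \<bullet> u2 + w2 \<bullet> w2"
      have \<beta>: "\<beta> > 0" using False Bpos[of u2] Bpos[of w2] Bnn[of u2] Bnn[of w2]
        unfolding \<beta>_def by (cases "u2 = 0") auto
      have \<kappa>: "\<kappa> \<ge> 0" unfolding \<kappa>_def
        using Kpos[of u1] Kpos[of w1] linear_0[OF linK] by (cases "u1 = 0"; cases "w1 = 0") auto
      have \<rho>: "\<rho> \<ge> 0" unfolding \<rho>_def by simp
      have i2: "u2 \<bullet> (- B0 u2 - adjP (K u1)) = u2 \<bullet> (a *\<^sub>R u2 - b *\<^sub>R w2)" using E2 by simp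
      have i4: "w2 \<bullet> (- B0 w2 - adjP (K w1)) = w2 \<bullet> (b *\<^sub>R u2 + a *\<^sub>R w2)" using E4 by simp
      have a2: "u2 \<bullet> adjP (K u1) = a * (u1 \<bullet> K u1) - b * (w1 \<bullet> K u1)"
        using adjP_inner[of "K u1" u2] E1 by (simp add: inner_commute[of "K u1"] inner_diff_left)
      have a4: "w2 \<bullet> adjP (K w1) = b * (u1 \<bullet> K w1) + a * (w1 \<bullet> K w1)"
        using adjP_inner[of "K w1" w2] E3 by (simp add: inner_commute[of "K w1"] inner_add_left)
      have sy: "w1 \<bullet> K u1 = u1 \<bullet> K w1" by (rule Ksym)
      have "- \<beta> - a * \<kappa> = a * \<rho>"
        using i2 i4 a2 a4 sy unfolding \<beta>_def \<kappa>_def \<rho>_def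
        by (simp add: inner_diff_right inner_add_right inner_commute[of w2 u2] algebra_simps)
      then have "a * (\<kappa> + \<rho>) < 0" using \<beta> by (simp add: algebra_simps)
      then have "a < 0" using \<kappa> \<rho> by (smt (verit) mult_nonneg_nonneg)
      then show ?thesis by (simp add: a_def)
    qed
  qed
  show ?thesis unfolding robustly_stable_def using f0 dR spec by blast
qed


end
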